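(* For all integers $m,n\ge1$, all functions $\Psi_1,\dots,\Psi_m:\mathbb{Z}^n\to\mathbb{R}_{>0}$ and each $\circ\in\{\ ,\ ',\ ''\}$, the set $\mathcal{F}^\circ_{n,m}(\Psi_1,\dots,\Psi_m)=\bigcup_{k=1}^\infty\mathcal{A}^\circ_{n,m}(k\Psi_1,\dots,k\Psi_m)$ has Lebesgue measure $0$ or $1$.
   Context: Let $m,n\ge1$ be integers. Points $\mathbf{X}\in[0,1]^{nm}$ are regarded as real $n\times m$ matrices with columns $\mathbf{X}^{(1)},\dots,\mathbf{X}^{(m)}$, and $\mathbf{q}\in\mathbb{Z}^n$ as a row vector. For $\Psi_1,\dots,\Psi_m:\mathbb{Z}^n\to\mathbb{R}_{>0}$ consider the system ( ** ) $|\mathbf{q}\mathbf{X}^{(j)}+p_j|<\Psi_j(\mathbf{q})$ for all $j=1,\dots,m$, with $\mathbf{p}=(p_1,\dots,p_m)\in\mathbb{Z}^m$, $\mathbf{q}\in\mathbb{Z}^n\setminus\{\mathbf{0}\}$. $\mathcal{A}_{n,m}(\Psi_1,\dots,\Psi_m)$ is the set of $\mathbf{X}\in[0,1]^{nm}$ for which ( ** ) holds for infinitely many $(\mathbf{p},\mathbf{q})$; $\mathcal{A}'_{n,m}(\Psi_1,\dots,\Psi_m)$ is the same with the additional requirement $\gcd(\mathbf{p},\mathbf{q})=1$ (gcd of all components of $\mathbf{p}$ and $\mathbf{q}$); $\mathcal{A}''_{n,m}(\Psi_1,\dots,\Psi_m)$ is the same with the additional requirement $\gcd(p_j,\mathbf{q})=1$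 for every $j=1,\dots,m$. $\mathcal{A}^\circ_{n,m}$ denotes any one of these three sets, and $k\Psi_j$ is $\mathbf{q}\mapsto k\Psi_j(\mathbf{q})$. *)

theory Defs
  imports "HOL-Analysis.Analysis"
begin

text \<open>An n x m real matrix X is an element of real^'m^'n (row index 'n, column index 'm);
  column j of X is (\<lambda>i. X$i$j).\<close>

datatype coprimality = NoCond | GcdAll | GcdEach

definition linform :: "int^'n \<Rightarrow> real^'m^'n \<Rightarrow> 'm \<Rightarrow> real" where
  "linform q X j = (\<Sum>i\<in>UNIV. real_of_int (q $ i) * X $ i $ j)"

definition unit_cube_mat :: "(real^'m^'n) set" where
  "unit_cube_mat = {X. \<forall>i j. 0 \<le> X $ i $ j \<and> X $ i $ j \<le> 1}"

fun cond_ok :: "coprimality \<Rightarrow> int^'m \<Rightarrow> int^'n \<Rightarrow> bool" where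
  "cond_ok NoCond p q = True"
| "cond_ok GcdAll p q = (Gcd (range (\<lambda>j. p $ j) \<union> range (\<lambda>i. q $ i)) = 1)"
| "cond_ok GcdEach p q = (\<forall>j. Gcd (insert (p $ j) (range (\<lambda>i. q $ i))) = 1)"

definition approx_set :: "coprimality \<Rightarrow> ('m \<Rightarrow> int^'n \<Rightarrow> real) \<Rightarrow> (real^'m^'n) set" where
  "approx_set c \<Psi> = {X \<in> unit_cube_mat.
      infinite {(p :: int^'m, q :: int^'n). q \<noteq> 0 \<and> cond_ok c p q \<and>
                 (\<forall>j. \<bar>linform q X j + real_of_int (p $ j)\<bar> < \<Psi> j q)}}"

definition F_set :: "coprimality \<Rightarrow> ('m \<Rightarrow> int^'n \<Rightarrow> real) \<Rightarrow> (real^'m^'n) set" where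
  "F_set c \<Psi> = (\<Union>k\<in>{1::nat..}. approx_set c (\<lambda>j q. real k * \<Psi> j q))"

end

theory Submission
  imports Defs "HOL-Analysis.Analysis"
begin


definition hbox :: "'a::euclidean_space \<Rightarrow> 'a \<Rightarrow> 'a set" where
  "hbox l u = {x. \<forall>b\<in>Basis. l\<bullet>b \<le> x\<bullet>b \<and> x\<bullet>b < u\<bullet>b}"

lemma hbox_borel: "hbox l u \<in> sets borel"
proof -
  have "hbox l u = (\<Inter>b\<in>Basis. {x. l\<bullet>b \<le> x\<bullet>b} \<inter> {x. x\<bullet>b < u\<bullet>b})"
    by (auto simp: hbox_def)
  also have "\<dots> \<in> sets borel"
    by (intro sets.finite_INT) (auto intro!: sets.Int borel_closed borel_open closed_halfspace_component_ge open_halfspace_component_lt)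
  finally show ?thesis .
qed

lemma borel_leb: "A \<in> sets borel \<Longrightarrow> A \<in> sets lebesgue"
  by (metis sets_completionI_sets sets_lborel)

lemma hbox_emeasure:
  assumes "\<And>b. b\<in>Basis \<Longrightarrow> l\<bullet>b \<le> u\<bullet>b"
  shows "emeasure lebesgue (hbox l u) = (\<Prod>b\<in>Basis. (u - l)\<bullet>b)"
proof -
  have s1: "box l u \<subseteq> hbox l u" "hbox l u \<subseteq> cbox l u"
    by (auto simp: hbox_def mem_box; meson less_imp_le)+
  have e1: "emeasure lebesgue (box l u) = (\<Prod>b\<in>Basis. (u - l)\<bullet>b)"
    using assms by (simp add: emeasure_lborel_box_eq emeasure_completion)
  have e2: "emeasure lebesgue (cbox l u) = (\<Prod>b\<in>Basis. (u - l)\<bullet>b)"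
    using assms by (simp add: emeasure_lborel_cbox_eq emeasure_completion)
  have m: "hbox l u \<in> sets lebesgue" "cbox l u \<in> sets lebesgue"
    using borel_leb[OF hbox_borel] by (auto intro: fmeasurableD)
  show ?thesis
    using emeasure_mono[OF s1(1) m(1)] emeasure_mono[OF s1(2) m(2)] e1 e2
    by (metis antisym)
qed

definition Qc :: "'a::euclidean_space set" where "Qc = hbox 0 One"
definition Lam :: "'a::euclidean_space set" where "Lam = {z. \<forall>b\<in>Basis. z\<bullet>b \<in> \<int>}"
definition per :: "'a::euclidean_space set \<Rightarrow> bool" where
  "per P \<longleftrightarrow> (\<forall>x z. z \<in> Lam \<longrightarrow> (x + z \<in> P \<longleftrightarrow> x \<in> P))"
definition ZN :: "nat \<Rightarrow> 'a::euclidean_space set" where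
  "ZN N = {z\<in>Lam. \<forall>b\<in>Basis. 0 \<le> z\<bullet>b \<and> z\<bullet>b < real N}"
definition bx :: "nat \<Rightarrow> 'a::euclidean_space \<Rightarrow> 'a set" where
  "bx N z = hbox ((1/real N) *\<^sub>R z) ((1/real N) *\<^sub>R (z + One))"
definition flr :: "'a::euclidean_space \<Rightarrow> 'a" where
  "flr x = (\<Sum>b\<in>Basis. of_int \<lfloor>x\<bullet>b\<rfloor> *\<^sub>R b)"

lemma inner_sum_Basis_coeff: "b \<in> Basis \<Longrightarrow> (\<Sum>b'\<in>Basis. c b' *\<^sub>R b') \<bullet> b = c b"
  by (simp add: inner_sum_left inner_Basis if_distrib cong: if_cong)

lemma flr_inner: "b \<in> Basis \<Longrightarrow> flr x \<bullet> b = of_int \<lfloor>x\<bullet>b\<rfloor>"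
  unfolding flr_def by (rule inner_sum_Basis_coeff)

lemma flr_Lam: "flr x \<in> Lam"
  by (simp add: Lam_def flr_inner)

lemma mem_Qc: "x \<in> Qc \<longleftrightarrow> (\<forall>b\<in>Basis. 0 \<le> x\<bullet>b \<and> x\<bullet>b < 1)"
  by (simp add: Qc_def hbox_def)

lemma diff_flr_Qc: "x - flr x \<in> Qc"
  by (auto simp: mem_Qc inner_diff_left flr_inner) linarith

lemma Qc_borel: "Qc \<in> sets borel" by (simp add: Qc_def hbox_borel)
lemma Qc_leb: "Qc \<in> sets lebesgue" by (simp add: Qc_borel borel_leb)
lemma Qc_emeasure: "emeasure lebesgue (Qc::'a::euclidean_space set) = 1"
  by (simp add: Qc_def hbox_emeasure)
lemma Qc_lmeas: "(Qc::'a::euclidean_space set) \<in> lmeasurable"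
  by (simp add: fmeasurable_def Qc_leb Qc_emeasure)
lemma Qc_measure: "measure lebesgue (Qc::'a::euclidean_space set) = 1"
  by (simp add: measure_def Qc_emeasure)

lemma Lam_add: "z \<in> Lam \<Longrightarrow> w \<in> Lam \<Longrightarrow> z + w \<in> Lam"
  by (auto simp: Lam_def inner_add_left)
lemma Lam_minus: "z \<in> Lam \<Longrightarrow> - z \<in> Lam"
  by (auto simp: Lam_def)
lemma Lam_diff: "z \<in> Lam \<Longrightarrow> w \<in> Lam \<Longrightarrow> z - w \<in> Lam"
  by (auto simp: Lam_def inner_diff_left)

lemma Lam_inj: "inj_on (\<lambda>z. \<lambda>b\<in>Basis. \<lfloor>z\<bullet>b\<rfloor>) (Lam::'a::euclidean_space set)"
proof (rule inj_onI)
  fix z w :: 'a assume z: "z \<in> Lam" and w: "w \<in> Lam"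
    and e: "(\<lambda>b\<in>Basis. \<lfloor>z\<bullet>b\<rfloor>) = (\<lambda>b\<in>Basis. \<lfloor>w\<bullet>b\<rfloor>)"
  show "z = w"
  proof (rule euclidean_eqI)
    fix b :: 'a assume b: "b \<in> Basis"
    have "\<lfloor>z\<bullet>b\<rfloor> = \<lfloor>w\<bullet>b\<rfloor>" using fun_cong[OF e, of b] b by simp
    moreover have "z\<bullet>b \<in> \<int>" "w\<bullet>b \<in> \<int>" using z w b by (auto simp: Lam_def)
    ultimately show "z\<bullet>b = w\<bullet>b" by (metis Ints_cases floor_of_int)
  qed
qed

lemma countable_Lam: "countable (Lam::'a::euclidean_space set)"
proof -
  have "(\<lambda>z. \<lambda>b\<in>Basis. \<lfloor>z\<bullet>b\<rfloor>) ` (Lam::'a set) \<subseteq> PiE Basis (\<lambda>_. UNIV)"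
    by auto
  moreover have "countable (PiE (Basis::'a set) (\<lambda>_. UNIV::int set))"
    by (rule countable_PiE) auto
  ultimately have "countable ((\<lambda>z. \<lambda>b\<in>Basis. \<lfloor>z\<bullet>b\<rfloor>) ` (Lam::'a set))"
    by (rule countable_subset)
  then show ?thesis using Lam_inj by (rule countable_image_inj_on)
qed

lemma finite_ZN: "finite (ZN N :: 'a::euclidean_space set)"
proof -
  have "(\<lambda>z. \<lambda>b\<in>Basis. \<lfloor>z\<bullet>b\<rfloor>) ` (ZN N::'a set) \<subseteq> PiE Basis (\<lambda>_. {0..int N})"
  proof
    fix f assume "f \<in> (\<lambda>z. \<lambda>b\<in>Basis. \<lfloor>z\<bullet>b\<rfloor>) ` (ZN N::'a set)"
    then obtain z where z: "z \<in> ZN N" and f: "f = (\<lambda>b\<in>Basis. \<lfloor>z\<bullet>b\<rfloor>)" by blast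
    have "0 \<le> \<lfloor>z\<bullet>b\<rfloor> \<and> \<lfloor>z\<bullet>b\<rfloor> \<le> int N" if "b \<in> Basis" for b
    proof -
      have "0 \<le> z\<bullet>b" "z\<bullet>b < real N" using z that by (auto simp: ZN_def)
      then show ?thesis by linarith
    qed
    then show "f \<in> PiE Basis (\<lambda>_. {0..int N})" using f by auto
  qed
  moreover have "finite (PiE (Basis::'a set) (\<lambda>_. {0..int N}))"
    by (rule finite_PiE) auto
  moreover have "inj_on (\<lambda>z. \<lambda>b\<in>Basis. \<lfloor>z\<bullet>b\<rfloor>) (ZN N::'a set)"
    using Lam_inj by (rule inj_on_subset) (simp add: ZN_def subset_iff)
  ultimately show ?thesis
    using finite_subset finite_imageD by metis
qed

lemma mem_bx:
  assumes "N > 0"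
  shows "x \<in> bx N z \<longleftrightarrow> (\<forall>b\<in>Basis. z\<bullet>b \<le> real N * (x\<bullet>b) \<and> real N * (x\<bullet>b) < z\<bullet>b + 1)"
  using assms by (simp add: bx_def hbox_def inner_add_left field_simps)

lemma bx_image:
  assumes "N > 0"
  shows "bx N z = (\<lambda>x. (1/real N) *\<^sub>R x + (1/real N) *\<^sub>R z) ` Qc"
proof (rule set_eqI)
  fix x :: 'a
  have "x = (1/real N) *\<^sub>R (real N *\<^sub>R x - z) + (1/real N) *\<^sub>R z"
    using assms by (simp add: algebra_simps)
  note eqx = this
  have "x \<in> (\<lambda>x. (1/real N) *\<^sub>R x + (1/real N) *\<^sub>R z) ` Qc \<longleftrightarrow> real N *\<^sub>R x - z \<in> Qc"
  proof
    assume "x \<in> (\<lambda>x. (1/real N) *\<^sub>R x + (1/real N) *\<^sub>R z) ` Qc"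
    then obtain y where y: "y \<in> Qc" "x = (1/real N) *\<^sub>R y + (1/real N) *\<^sub>R z" by blast
    then have "real N *\<^sub>R x - z = y" using assms by (simp add: algebra_simps)
    with y show "real N *\<^sub>R x - z \<in> Qc" by simp
  next
    assume "real N *\<^sub>R x - z \<in> Qc"
    then show "x \<in> (\<lambda>x. (1/real N) *\<^sub>R x + (1/real N) *\<^sub>R z) ` Qc"
      by (subst eqx) (rule imageI)
  qed
  also have "\<dots> \<longleftrightarrow> x \<in> bx N z"
    using assms by (auto simp: mem_bx mem_Qc inner_diff_left)
  finally show "x \<in> bx N z \<longleftrightarrow> x \<in> (\<lambda>x. (1/real N) *\<^sub>R x + (1/real N) *\<^sub>R z) ` Qc" by simp
qed

lemma bx_leb: "bx N z \<in> sets lebesgue"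
  by (simp add: bx_def hbox_borel borel_leb)

lemma bx_emeasure:
  assumes "N > 0"
  shows "emeasure lebesgue (bx N z :: 'a::euclidean_space set) = ennreal ((1/real N)^DIM('a))"
  using emeasure_lebesgue_affine[of "1/real N" "(1/real N) *\<^sub>R z" "Qc::'a set"] assms
  by (simp add: bx_image Qc_emeasure)

lemma bx_lmeas: "N > 0 \<Longrightarrow> bx N z \<in> lmeasurable"
  by (rule fmeasurableI[OF bx_leb]) (simp add: bx_emeasure)

lemma bx_measure: "N > 0 \<Longrightarrow> measure lebesgue (bx N z :: 'a::euclidean_space set) = (1/real N)^DIM('a)"
  by (simp add: measure_def bx_emeasure)

lemma Lam_floor: assumes "z \<in> Lam" "b \<in> Basis" "z\<bullet>b \<le> t" "t < z\<bullet>b + 1" shows "z\<bullet>b = of_int \<lfloor>t\<rfloor>"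
proof -
  from assms obtain k where k: "z\<bullet>b = of_int k" by (auto simp: Lam_def elim: Ints_cases)
  with assms(3,4) have "\<lfloor>t\<rfloor> = k" by (simp add: floor_eq_iff)
  with k show ?thesis by simp
qed

lemma Qc_sub:
  assumes "N > 0" "x \<in> Qc"
  shows "x \<in> (\<Union>z\<in>ZN N. bx N z)"
proof -
  let ?z = "flr (real N *\<^sub>R x)"
  have "0 \<le> ?z\<bullet>b \<and> ?z\<bullet>b < real N" if "b\<in>Basis" for b
  proof -
    have "0 \<le> x\<bullet>b" "x\<bullet>b < 1" using assms(2) that by (auto simp: mem_Qc)
    then have "0 \<le> real N * (x\<bullet>b)" "real N * (x\<bullet>b) < real N" using assms(1) by auto
    then have "0 \<le> \<lfloor>real N * (x\<bullet>b)\<rfloor>" "\<lfloor>real N * (x\<bullet>b)\<rfloor> < int N"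
      by (simp_all add: floor_less_iff)
    moreover have "?z\<bullet>b = of_int \<lfloor>real N * (x\<bullet>b)\<rfloor>" using that by (simp add: flr_inner)
    ultimately show ?thesis by simp
  qed
  then have "?z \<in> ZN N" by (simp add: ZN_def flr_Lam)
  moreover have "x \<in> bx N ?z"
    using assms(1) by (auto simp: mem_bx flr_inner)
  ultimately show ?thesis by blast
qed

lemma bx_sub:
  assumes "N > 0" "z \<in> ZN N" "x \<in> bx N z"
  shows "x \<in> Qc"
  unfolding mem_Qc
proof
  fix b :: 'a assume b: "b \<in> Basis"
  have 1: "z\<bullet>b \<le> real N * (x\<bullet>b)" "real N * (x\<bullet>b) < z\<bullet>b + 1" using assms b by (auto simp: mem_bx)
  have 2: "0 \<le> z\<bullet>b" "z\<bullet>b < real N" "z\<bullet>b \<in> \<int>" using assms(2) b by (auto simp: ZN_def Lam_def)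
  obtain k where k: "z\<bullet>b = of_int k" using 2(3) by (auto elim: Ints_cases)
  have "k < int N" using 2(2) unfolding k by linarith
  then have 3: "z\<bullet>b + 1 \<le> real N" unfolding k by linarith
  have "0 \<le> real N * (x\<bullet>b)" using 1 2 by linarith
  then have "0 \<le> x\<bullet>b" using assms(1) by (simp add: zero_le_mult_iff)
  moreover have "real N * (x\<bullet>b) < real N * 1" using 1 3 by linarith
  then have "x\<bullet>b < 1" using assms(1) by (simp only: mult_less_cancel_left_pos of_nat_0_less_iff)
  ultimately show "0 \<le> x\<bullet>b \<and> x\<bullet>b < 1" by simp
qed

lemma Qc_decomp:
  assumes "N > 0"
  shows "(Qc::'a::euclidean_space set) = (\<Union>z\<in>ZN N. bx N z)" "disjoint_family_on (bx N) (ZN N :: 'a set)"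
proof -
  show "(Qc::'a::euclidean_space set) = (\<Union>z\<in>ZN N. bx N z)"
    using Qc_sub[OF assms] bx_sub[OF assms] by blast
  show "disjoint_family_on (bx N) (ZN N :: 'a set)"
    unfolding disjoint_family_on_def
  proof (intro ballI impI)
    fix z w :: 'a assume z: "z \<in> ZN N" and w: "w \<in> ZN N" and ne: "z \<noteq> w"
    show "bx N z \<inter> bx N w = {}"
    proof (rule ccontr)
      assume "bx N z \<inter> bx N w \<noteq> {}"
      then obtain x where x: "x \<in> bx N z" "x \<in> bx N w" by blast
      have "z = w"
      proof (rule euclidean_eqI)
        fix b :: 'a assume b: "b \<in> Basis"
        have "z\<bullet>b = of_int \<lfloor>real N * (x\<bullet>b)\<rfloor>"
          using x(1) z b assms by (intro Lam_floor) (auto simp: mem_bx ZN_def)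
        moreover have "w\<bullet>b = of_int \<lfloor>real N * (x\<bullet>b)\<rfloor>"
          using x(2) w b assms by (intro Lam_floor) (auto simp: mem_bx ZN_def)
        ultimately show "z\<bullet>b = w\<bullet>b" by simp
      qed
      with ne show False by simp
    qed
  qed
qed

lemma per_null:
  assumes "per P" "negligible (P \<inter> Qc)"
  shows "negligible P"
proof -
  have "P \<subseteq> \<Union>((\<lambda>z. (+) z ` (P \<inter> Qc)) ` Lam)"
  proof
    fix x assume x: "x \<in> P"
    have "x - flr x \<in> P" using assms(1) x flr_Lam[of x] Lam_minus
      unfolding per_def by (metis diff_conv_add_uminus)
    then have "x - flr x \<in> P \<inter> Qc" using diff_flr_Qc by blast
    then have "x \<in> (+) (flr x) ` (P \<inter> Qc)" by (metis add.commute diff_add_cancel image_eqI)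
    then show "x \<in> \<Union>((\<lambda>z. (+) z ` (P \<inter> Qc)) ` Lam)" using flr_Lam by blast
  qed
  moreover have "negligible (\<Union>((\<lambda>z. (+) z ` (P \<inter> Qc)) ` Lam))"
    by (rule negligible_countable_Union) (auto intro: countable_Lam negligible_translation assms(2))
  ultimately show ?thesis using negligible_subset by blast
qed

lemma per_compl: "per P \<Longrightarrow> per (- P)"
  by (simp add: per_def)

lemma Qc_flr_bx:
  assumes "N > 0" "x \<in> Qc"
  shows "flr (real N *\<^sub>R x) \<in> ZN N" "x \<in> bx N (flr (real N *\<^sub>R x))"
  using Qc_sub[OF assms] Qc_decomp(2)[OF assms(1)] 
proof -
  let ?z = "flr (real N *\<^sub>R x)"
  have "0 \<le> ?z\<bullet>b \<and> ?z\<bullet>b < real N" if "b\<in>Basis" for b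
  proof -
    have "0 \<le> x\<bullet>b" "x\<bullet>b < 1" using assms(2) that by (auto simp: mem_Qc)
    then have "0 \<le> real N * (x\<bullet>b)" "real N * (x\<bullet>b) < real N" using assms(1) by auto
    then have "0 \<le> \<lfloor>real N * (x\<bullet>b)\<rfloor>" "\<lfloor>real N * (x\<bullet>b)\<rfloor> < int N"
      by (simp_all add: floor_less_iff)
    moreover have "?z\<bullet>b = of_int \<lfloor>real N * (x\<bullet>b)\<rfloor>" using that by (simp add: flr_inner)
    ultimately show ?thesis by simp
  qed
  then show "?z \<in> ZN N" by (simp add: ZN_def flr_Lam)
  show "x \<in> bx N ?z"
    using assms(1) by (auto simp: mem_bx flr_inner)
qed

lemma bx_near:
  fixes x y :: "'a::euclidean_space"
  assumes "N > 0" "y \<in> bx N (flr (real N *\<^sub>R x))"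
  shows "dist y x \<le> real DIM('a) / real N"
proof -
  have c: "\<bar>(y - x)\<bullet>b\<bar> \<le> 1 / real N" if b: "b \<in> Basis" for b
  proof -
    have "of_int \<lfloor>real N * (x\<bullet>b)\<rfloor> \<le> real N * (y\<bullet>b)" "real N * (y\<bullet>b) < of_int \<lfloor>real N * (x\<bullet>b)\<rfloor> + 1"
      using assms b by (auto simp: mem_bx flr_inner)
    moreover have "of_int \<lfloor>real N * (x\<bullet>b)\<rfloor> \<le> real N * (x\<bullet>b)" "real N * (x\<bullet>b) < of_int \<lfloor>real N * (x\<bullet>b)\<rfloor> + 1"
      by linarith+
    ultimately have "\<bar>real N * (y\<bullet>b) - real N * (x\<bullet>b)\<bar> \<le> 1" by linarith
    then have "real N * \<bar>(y - x)\<bullet>b\<bar> \<le> 1"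
      by (simp add: inner_diff_left right_diff_distrib[symmetric] abs_mult)
    then show ?thesis using assms(1) by (simp add: field_simps)
  qed
  have "dist y x = norm (y - x)" by (simp add: dist_norm)
  also have "\<dots> \<le> (\<Sum>b\<in>Basis. \<bar>(y - x)\<bullet>b\<bar>)" by (rule norm_le_l1)
  also have "\<dots> \<le> of_nat (card (Basis::'a set)) * (1 / real N)"
    by (rule sum_bounded_above) (use c in auto)
  finally show ?thesis by simp
qed

lemma final01:
  fixes G :: "'a::euclidean_space set"
  assumes G: "G \<in> sets lebesgue" and I: "infinite I" and I0: "0 \<notin> I"
    and H: "\<And>N z. N \<in> I \<Longrightarrow> z \<in> ZN N \<Longrightarrow>
        measure lebesgue (G \<inter> bx N z) \<le> measure lebesgue (G \<inter> Qc) * measure lebesgue (bx N z)"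
  shows "measure lebesgue (G \<inter> Qc) = 0 \<or> measure lebesgue (G \<inter> Qc) = 1"
proof -
  define \<alpha> where "\<alpha> = measure lebesgue (G \<inter> Qc)"
  have GQ: "G \<inter> Qc \<in> lmeasurable"
    using fmeasurable_Int_fmeasurable[OF Qc_lmeas G] by (simp add: Int_commute)
  have a0: "0 \<le> \<alpha>" by (simp add: \<alpha>_def)
  have a1: "\<alpha> \<le> 1"
    unfolding \<alpha>_def using measure_mono_fmeasurable[OF Int_lower2 fmeasurableD[OF GQ] Qc_lmeas]
    by (simp add: Qc_measure)
  have key: "\<alpha> \<le> \<alpha> * (\<alpha> + e) + e" if e: "e > 0" for e
  proof -
    obtain U where U: "open U" "G \<inter> Qc \<subseteq> U" "U - (G \<inter> Qc) \<in> lmeasurable"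
        "emeasure lebesgue (U - (G \<inter> Qc)) < ennreal e"
      using sets_lebesgue_outer_open[OF fmeasurableD[OF GQ] e] by blast
    have Ul: "U \<in> sets lebesgue" using U(1) by (simp add: borel_leb)
    define V where "V = Qc \<inter> U"
    have Vl: "V \<in> lmeasurable" unfolding V_def by (rule fmeasurable_Int_fmeasurable[OF Qc_lmeas Ul])
    have mUG: "measure lebesgue (U - (G \<inter> Qc)) < e"
      using U(3,4) by (simp add: emeasure_eq_measure2 ennreal_less_iff)
    have muV: "measure lebesgue V \<le> \<alpha> + e"
    proof -
      have "measure lebesgue V \<le> measure lebesgue ((G \<inter> Qc) \<union> (U - (G \<inter> Qc)))"
        by (rule measure_mono_fmeasurable[OF _ fmeasurableD[OF Vl] fmeasurable.Un[OF GQ U(3)]]) (auto simp: V_def)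
      also have "\<dots> \<le> \<alpha> + measure lebesgue (U - (G \<inter> Qc))"
        unfolding \<alpha>_def by (rule measure_Un_le) (auto intro: fmeasurableD GQ U(3))
      finally show ?thesis using mUG by simp
    qed
    define Zs where "Zs N = {z\<in>ZN N. bx N z \<subseteq> U}" for N
    define W where "W N = (\<Union>z\<in>Zs N. bx N z)" for N
    define Y where "Y M = V - (\<Union>N\<in>{N\<in>I. M \<le> N}. V - W N)" for M
    have finZs: "finite (Zs N)" for N unfolding Zs_def by (rule finite_subset[OF _ finite_ZN]) auto
    have Wm: "W N \<in> sets lebesgue" for N
      unfolding W_def by (intro sets.countable_UN'' countable_finite finZs bx_leb)
    have Ym: "Y M \<in> sets lebesgue" for M
      unfolding Y_def
      by (intro sets.Diff sets.countable_UN'' fmeasurableD[OF Vl] Wm countableI_type)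
    have inc: "incseq Y"
      unfolding incseq_def Y_def by auto
    have unionY: "(\<Union>M. Y M) = V"
    proof
      show "(\<Union>M. Y M) \<subseteq> V" by (auto simp: Y_def)
      show "V \<subseteq> (\<Union>M. Y M)"
      proof
        fix x assume xV: "x \<in> V"
        then have xQ: "x \<in> Qc" and xU: "x \<in> U" by (auto simp: V_def)
        obtain d where d: "d > 0" "ball x d \<subseteq> U" using U(1) xU open_contains_ball by blast
        obtain M :: nat where M: "real DIM('a) / d < real M" using reals_Archimedean2 by blast
        have "x \<in> W N" if N: "N \<in> I" "M \<le> N" for N
        proof -
          have N0: "N > 0" using N I0 by (cases N) auto
          have "bx N (flr (real N *\<^sub>R x)) \<subseteq> U"
          proof
            fix y assume y: "y \<in> bx N (flr (real N *\<^sub>R x))"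
            have "dist y x \<le> real DIM('a) / real N" by (rule bx_near[OF N0 y])
            also have "\<dots> < d"
            proof -
              have "real DIM('a) < d * real M" using M d(1) by (simp add: field_simps)
              also have "\<dots> \<le> d * real N" using N(2) d(1) by simp
              finally show ?thesis using N0 by (simp add: field_simps)
            qed
            finally show "y \<in> U" using d(2) by (auto simp: dist_commute)
          qed
          then show ?thesis unfolding W_def Zs_def using Qc_flr_bx[OF N0 xQ] by blast
        qed
        then have "x \<in> Y M" using xV by (auto simp: Y_def)
        then show "x \<in> (\<Union>M. Y M)" by blast
      qed
    qed
    have "(\<lambda>M. measure lebesgue (Y M)) \<longlonglongrightarrow> measure lebesgue (\<Union>M. Y M)"
      by (rule Lim_measure_incseq) (use Ym inc unionY fmeasurableD2[OF Vl] in \<open>auto\<close>)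
    then have "(\<lambda>M. measure lebesgue (Y M)) \<longlonglongrightarrow> measure lebesgue V" by (simp add: unionY)
    then obtain M where M: "\<bar>measure lebesgue (Y M) - measure lebesgue V\<bar> < e"
      using LIMSEQ_D[OF _ e] by fastforce
    obtain N where N: "N \<in> I" "M \<le> N" using I infinite_nat_iff_unbounded_le by blast
    have N0: "N > 0" using N I0 by (cases N) auto
    have YV: "Y M \<subseteq> V" by (auto simp: Y_def)
    have WV: "W N \<subseteq> V"
      unfolding W_def Zs_def V_def using bx_sub[OF N0] by blast
    have cover: "G \<inter> V \<subseteq> (G \<inter> W N) \<union> (V - Y M)"
      using N by (auto simp: Y_def)
    have GV: "G \<inter> Qc = G \<inter> V" using U(2) by (auto simp: V_def)
    have disj: "disjoint_family_on (bx N) (Zs N)"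
      using Qc_decomp(2)[OF N0] by (rule disjoint_family_on_mono[rotated]) (auto simp: Zs_def)
    have s1: "measure lebesgue (G \<inter> W N) = (\<Sum>z\<in>Zs N. measure lebesgue (G \<inter> bx N z))"
    proof -
      have "G \<inter> W N = (\<Union>z\<in>Zs N. G \<inter> bx N z)" by (auto simp: W_def)
      moreover have "measure lebesgue (\<Union>z\<in>Zs N. G \<inter> bx N z) = (\<Sum>z\<in>Zs N. measure lebesgue (G \<inter> bx N z))"
      proof (rule measure_finite_Union[OF finZs])
        show "(\<lambda>z. G \<inter> bx N z) ` Zs N \<subseteq> sets lebesgue" using G bx_leb by auto
        show "disjoint_family_on (\<lambda>z. G \<inter> bx N z) (Zs N)"
          using disj by (auto simp: disjoint_family_on_def)
        show "emeasure lebesgue (G \<inter> bx N z) \<noteq> \<infinity>" for z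
        proof -
          have "G \<inter> bx N z \<in> lmeasurable"
            by (subst Int_commute, rule fmeasurable_Int_fmeasurable[OF bx_lmeas[OF N0] G])
          then show ?thesis unfolding infinity_ennreal_def by (rule fmeasurableD2)
        qed
      qed
      ultimately show ?thesis by simp
    qed
    have s2: "measure lebesgue (W N) = (\<Sum>z\<in>Zs N. measure lebesgue (bx N z))"
      unfolding W_def
      by (rule measure_finite_Union[OF finZs]) (use disj bx_leb fmeasurableD2[OF bx_lmeas[OF N0]] in \<open>auto\<close>)
    have "measure lebesgue (G \<inter> W N) \<le> (\<Sum>z\<in>Zs N. \<alpha> * measure lebesgue (bx N z))"
      unfolding s1 \<alpha>_def by (rule sum_mono) (use H N(1) in \<open>auto simp: Zs_def\<close>)
    also have "\<dots> = \<alpha> * measure lebesgue (W N)" by (simp add: s2 sum_distrib_left)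
    also have "\<dots> \<le> \<alpha> * (\<alpha> + e)"
    proof (rule mult_left_mono[OF _ a0])
      have "measure lebesgue (W N) \<le> measure lebesgue V"
        by (rule measure_mono_fmeasurable[OF WV Wm Vl])
      then show "measure lebesgue (W N) \<le> \<alpha> + e" using muV by simp
    qed
    finally have gw: "measure lebesgue (G \<inter> W N) \<le> \<alpha> * (\<alpha> + e)" .
    have "\<alpha> = measure lebesgue (G \<inter> V)" unfolding \<alpha>_def GV ..
    also have "\<dots> \<le> measure lebesgue ((G \<inter> W N) \<union> (V - Y M))"
      by (rule measure_mono_fmeasurable[OF cover])
         (use G Vl Wm Ym WV in \<open>auto intro!: fmeasurableI2[OF Vl]\<close>)
    also have "\<dots> \<le> measure lebesgue (G \<inter> W N) + measure lebesgue (V - Y M)"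
      by (rule measure_Un_le) (use G Vl Wm Ym in \<open>auto dest: fmeasurableD\<close>)
    also have "measure lebesgue (V - Y M) = measure lebesgue V - measure lebesgue (Y M)"
      by (rule measure_Diff) (use fmeasurableD2[OF Vl] Vl Ym YV in \<open>auto\<close>)
    finally show ?thesis using gw M by linarith
  qed
  have "\<alpha> = 0 \<or> \<alpha> = 1"
  proof (rule ccontr)
    assume "\<not> (\<alpha> = 0 \<or> \<alpha> = 1)"
    then have p: "0 < \<alpha>" "\<alpha> < 1" using a0 a1 by auto
    define e where "e = (\<alpha> - \<alpha> * \<alpha>) / 4"
    have e0: "e > 0" unfolding e_def using p by (simp add: mult_strict_left_mono)
    have "\<alpha> * e \<le> e" using a1 e0 by (simp add: mult_left_le_one_le)
    then have "\<alpha> \<le> \<alpha> * \<alpha> + 2 * e" using key[OF e0] by (simp add: algebra_simps)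
    then show False unfolding e_def using p by (simp add: field_simps)
  qed
  then show ?thesis by (simp add: \<alpha>_def)
qed

lemma mem_bx_Qc: "N > 0 \<Longrightarrow> x \<in> bx N z \<longleftrightarrow> real N *\<^sub>R x - z \<in> Qc"
  by (auto simp: mem_bx mem_Qc inner_diff_left)

lemma negl_from_01:
  fixes P :: "'a::euclidean_space set"
  assumes P: "P \<in> sets lebesgue" "per P"
    and m: "measure lebesgue (P \<inter> Qc) = 0 \<or> measure lebesgue (P \<inter> Qc) = 1"
  shows "negligible P \<or> negligible (- P)"
proof -
  have GQ: "P \<inter> Qc \<in> lmeasurable"
    using fmeasurable_Int_fmeasurable[OF Qc_lmeas P(1)] by (simp add: Int_commute)
  show ?thesis
    using m
  proof
    assume "measure lebesgue (P \<inter> Qc) = 0"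
    then have "negligible (P \<inter> Qc)" using GQ by (simp add: negligible_iff_measure0)
    then show ?thesis using per_null[OF P(2)] by blast
  next
    assume m1: "measure lebesgue (P \<inter> Qc) = 1"
    have "Qc - P \<in> lmeasurable" using fmeasurable_Diff[OF Qc_lmeas P(1)] .
    have "measure lebesgue (Qc - (Qc \<inter> P)) = measure lebesgue (Qc::'a set) - measure lebesgue (Qc \<inter> P)"
      by (rule measure_Diff) (use fmeasurableD2[OF Qc_lmeas] Qc_leb P(1) in auto)
    moreover have "Qc - (Qc \<inter> P) = Qc - P" by auto
    ultimately have "measure lebesgue (Qc - P) = measure lebesgue (Qc::'a set) - measure lebesgue (Qc \<inter> P)" by simp
    then have "measure lebesgue (Qc - P) = 0" using m1 by (simp add: Qc_measure Int_commute)
    then have "negligible (Qc - P)" using \<open>Qc - P \<in> lmeasurable\<close> by (simp add: negligible_iff_measure0)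
    then have "negligible ((- P) \<inter> Qc)" by (simp add: Diff_eq Int_commute)
    then show ?thesis using per_null[OF per_compl[OF P(2)]] by blast
  qed
qed

lemma erg_box:
  fixes P :: "'a::euclidean_space set"
  assumes P: "P \<in> sets lebesgue" "per P" and N: "N > 0"
    and inv: "\<And>x. x \<in> P \<Longrightarrow> real N *\<^sub>R x \<in> P" and z: "z \<in> ZN N"
  shows "measure lebesgue (P \<inter> bx N z) \<le> measure lebesgue (P \<inter> Qc) * measure lebesgue (bx N z)"
proof -
  define T where "T y = (1/real N) *\<^sub>R y + (1/real N) *\<^sub>R z" for y :: 'a
  define P' where "P' = (*\<^sub>R) (real N) -` P"
  have zL: "z \<in> Lam" "- z \<in> Lam" using z by (auto simp: ZN_def intro: Lam_minus)
  have P'm: "P' \<in> sets lebesgue"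
    unfolding P'_def using measurable_sets[OF lebesgue_measurable_scaling P(1)] by simp
  have eq: "P' \<inter> bx N z = T ` (P \<inter> Qc)"
  proof (rule set_eqI, rule iffI)
    fix x assume x: "x \<in> P' \<inter> bx N z"
    have "real N *\<^sub>R x - z \<in> Qc" using x N by (simp add: mem_bx_Qc)
    moreover have "real N *\<^sub>R x - z \<in> P" using x P(2) zL unfolding P'_def per_def
      by (metis IntD1 diff_conv_add_uminus vimageE)
    moreover have "x = T (real N *\<^sub>R x - z)" using N by (simp add: T_def algebra_simps)
    ultimately show "x \<in> T ` (P \<inter> Qc)" by blast
  next
    fix x assume "x \<in> T ` (P \<inter> Qc)"
    then obtain y where y: "y \<in> P" "y \<in> Qc" "x = T y" by blast
    have Nx: "real N *\<^sub>R x = y + z" using N y(3) by (simp add: T_def algebra_simps)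
    have "y + z \<in> P" using y(1) zL P(2) unfolding per_def by blast
    then have "x \<in> P'" unfolding P'_def using Nx by simp
    moreover have "x \<in> bx N z" using N Nx y(2) by (simp add: mem_bx_Qc)
    ultimately show "x \<in> P' \<inter> bx N z" by blast
  qed
  have sub: "P \<inter> bx N z \<subseteq> P' \<inter> bx N z" using inv by (auto simp: P'_def)
  have "measure lebesgue (P \<inter> bx N z) \<le> measure lebesgue (P' \<inter> bx N z)"
    by (rule measure_mono_fmeasurable[OF sub])
       (auto intro: P(1) bx_leb fmeasurableI2[OF bx_lmeas[OF N]] P'm)
  also have "\<dots> = (1/real N)^DIM('a) * measure lebesgue (P \<inter> Qc)"
    unfolding eq T_def using measure_lebesgue_affine[of "1/real N" "(1/real N) *\<^sub>R z" "P \<inter> Qc"] by simp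
  finally show ?thesis using bx_measure[OF N, of z] by (simp add: mult.commute)
qed

lemma erg0:
  fixes P :: "'a::euclidean_space set"
  assumes P: "P \<in> sets lebesgue" "per P" and l: "l \<ge> 2"
    and inv: "\<And>x. x \<in> P \<Longrightarrow> real l *\<^sub>R x \<in> P"
  shows "negligible P \<or> negligible (- P)"
proof (rule negl_from_01[OF P])
  have invt: "x \<in> P \<Longrightarrow> real (l^t) *\<^sub>R x \<in> P" for t x
  proof (induction t arbitrary: x)
    case 0 then show ?case by simp
  next
    case (Suc t)
    have "real l *\<^sub>R (real (l^t) *\<^sub>R x) \<in> P" using inv Suc by blast
    then show ?case by simp
  qed
  have inj: "inj (\<lambda>t. l^t)" using l by (intro injI) (simp add: power_inject_exp)
  show "measure lebesgue (P \<inter> Qc) = 0 \<or> measure lebesgue (P \<inter> Qc) = 1"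
  proof (rule final01[OF P(1)])
    show "infinite (range (\<lambda>t. l^t))" using inj by (simp add: range_inj_infinite)
    show "0 \<notin> range (\<lambda>t. l^t)" using l by auto
    fix N and z :: 'a assume "N \<in> range (\<lambda>t. l^t)" "z \<in> ZN N"
    then obtain t where t: "N = l^t" by blast
    have N0: "N > 0" using t l by simp
    show "measure lebesgue (P \<inter> bx N z) \<le> measure lebesgue (P \<inter> Qc) * measure lebesgue (bx N z)"
      by (rule erg_box[OF P N0 _ \<open>z \<in> ZN N\<close>]) (use invt t in auto)
  qed
qed

lemma bx_trans:
  assumes N: "N > 0"
  shows "bx N (z + w) = (+) ((1/real N) *\<^sub>R w) ` bx N z"
proof (rule set_eqI)
  fix x :: 'a
  have "x \<in> (+) ((1/real N) *\<^sub>R w) ` bx N z \<longleftrightarrow> x - (1/real N) *\<^sub>R w \<in> bx N z"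
    by (auto simp: image_iff algebra_simps) (metis diff_add_cancel)
  also have "\<dots> \<longleftrightarrow> real N *\<^sub>R x - (z + w) \<in> Qc"
    using N by (simp add: mem_bx_Qc algebra_simps)
  finally show "x \<in> bx N (z + w) \<longleftrightarrow> x \<in> (+) ((1/real N) *\<^sub>R w) ` bx N z"
    using N by (simp add: mem_bx_Qc)
qed

lemma tr_le:
  fixes P C :: "'a::euclidean_space set"
  assumes P: "P \<in> sets lebesgue" and C: "C \<in> lmeasurable" and n: "negligible (P - (+) v ` P)"
  shows "measure lebesgue (P \<inter> (+) v ` C) \<le> measure lebesgue (P \<inter> C)"
proof -
  have PC: "P \<inter> C \<in> lmeasurable" using fmeasurable_Int_fmeasurable[OF C P] by (simp add: Int_commute)
  have tPC: "(+) v ` (P \<inter> C) \<in> lmeasurable" by (rule measurable_translation[OF PC])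
  have nl: "P - (+) v ` P \<in> lmeasurable" using n by (rule negligible_imp_measurable)
  have sub: "P \<inter> (+) v ` C \<subseteq> (+) v ` (P \<inter> C) \<union> (P - (+) v ` P)" by auto
  have m1: "P \<inter> (+) v ` C \<in> sets lebesgue"
    using P lebesgue_sets_translation[OF fmeasurableD[OF C], of v] by auto
  have "measure lebesgue (P \<inter> (+) v ` C) \<le> measure lebesgue ((+) v ` (P \<inter> C) \<union> (P - (+) v ` P))"
    by (rule measure_mono_fmeasurable[OF sub m1 fmeasurable.Un[OF tPC nl]])
  also have "\<dots> \<le> measure lebesgue ((+) v ` (P \<inter> C)) + measure lebesgue (P - (+) v ` P)"
    by (rule measure_Un_le) (use tPC nl in auto)
  also have "\<dots> = measure lebesgue (P \<inter> C)"
    using negligible_imp_measure0[OF n] by (simp add: measure_translation)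
  finally show ?thesis .
qed

lemma trans0:
  fixes P :: "'a::euclidean_space set"
  assumes P: "P \<in> sets lebesgue" "per P" and I: "infinite I" "0 \<notin> I"
    and inv: "\<And>N z. N \<in> I \<Longrightarrow> z \<in> Lam \<Longrightarrow> negligible (P - (+) ((1/real N) *\<^sub>R z) ` P)"
  shows "negligible P \<or> negligible (- P)"
proof (rule negl_from_01[OF P])
  show "measure lebesgue (P \<inter> Qc) = 0 \<or> measure lebesgue (P \<inter> Qc) = 1"
  proof (rule final01[OF P(1) I])
    fix N and z :: 'a assume N: "N \<in> I" and z: "z \<in> ZN N"
    have N0: "N > 0" using N I(2) by (cases N) auto
    have zL: "z \<in> Lam" using z by (simp add: ZN_def)
    have eqb: "measure lebesgue (P \<inter> bx N w) = measure lebesgue (P \<inter> bx N 0)" if w: "w \<in> Lam" for w :: 'a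
    proof (rule antisym)
      show "measure lebesgue (P \<inter> bx N w) \<le> measure lebesgue (P \<inter> bx N 0)"
        using tr_le[OF P(1) bx_lmeas[OF N0] inv[OF N w], of 0] bx_trans[OF N0, of 0 w] by simp
      show "measure lebesgue (P \<inter> bx N 0) \<le> measure lebesgue (P \<inter> bx N w)"
        using tr_le[OF P(1) bx_lmeas[OF N0] inv[OF N Lam_minus[OF w]], of w] bx_trans[OF N0, of w "-w"] by simp
    qed
    have 0: "(0::'a) \<in> ZN N" using N0 by (simp add: ZN_def Lam_def)
    have sP: "measure lebesgue (P \<inter> Qc) = (\<Sum>w\<in>ZN N. measure lebesgue (P \<inter> bx N w))"
    proof -
      have "P \<inter> (Qc::'a set) = (\<Union>w\<in>ZN N. P \<inter> bx N w)" using Qc_decomp(1)[OF N0] by auto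
      moreover have "measure lebesgue (\<Union>w\<in>ZN N. P \<inter> bx N w) = (\<Sum>w\<in>ZN N. measure lebesgue (P \<inter> bx N w))"
      proof (rule measure_finite_Union[OF finite_ZN])
        show "(\<lambda>w. P \<inter> bx N w) ` ZN N \<subseteq> sets lebesgue" using P(1) bx_leb by auto
        show "disjoint_family_on (\<lambda>w. P \<inter> bx N w) (ZN N :: 'a set)"
          using Qc_decomp(2)[OF N0] by (auto simp: disjoint_family_on_def)
        show "emeasure lebesgue (P \<inter> bx N w) \<noteq> \<infinity>" for w
        proof -
          have "P \<inter> bx N w \<in> lmeasurable"
            by (subst Int_commute, rule fmeasurable_Int_fmeasurable[OF bx_lmeas[OF N0] P(1)])
          then show ?thesis unfolding infinity_ennreal_def by (rule fmeasurableD2)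
        qed
      qed
      ultimately show ?thesis by simp
    qed
    have sQ: "measure lebesgue (Qc::'a set) = (\<Sum>w\<in>ZN N. measure lebesgue (bx N w :: 'a set))"
      unfolding Qc_decomp(1)[OF N0]
      by (rule measure_finite_Union[OF finite_ZN]) (use Qc_decomp(2)[OF N0] bx_leb fmeasurableD2[OF bx_lmeas[OF N0]] in auto)
    have "measure lebesgue (P \<inter> Qc) = real (card (ZN N :: 'a set)) * measure lebesgue (P \<inter> bx N 0)"
      unfolding sP using eqb by (simp add: ZN_def)
    moreover have "1 = real (card (ZN N :: 'a set)) * measure lebesgue (bx N 0 :: 'a set)"
      using sQ by (simp add: Qc_measure bx_measure[OF N0])
    moreover have "card (ZN N :: 'a set) > 0" using finite_ZN 0 by (auto simp: card_gt_0_iff)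
    ultimately have "measure lebesgue (P \<inter> bx N 0) = measure lebesgue (P \<inter> Qc) * measure lebesgue (bx N 0 :: 'a set)"
      by (simp add: field_simps)
    then show "measure lebesgue (P \<inter> bx N z) \<le> measure lebesgue (P \<inter> Qc) * measure lebesgue (bx N z)"
      using eqb[OF zL] bx_measure[OF N0, of z] bx_measure[OF N0, where z="0::'a"] by simp
  qed
qed

lemma tr_eq: fixes w :: "'a::ab_group_add" shows "(+) w ` P = {x. x - w \<in> P}"
proof (rule set_eqI)
  fix x
  show "x \<in> (+) w ` P \<longleftrightarrow> x \<in> {x. x - w \<in> P}"
  proof
    assume "x \<in> (+) w ` P"
    then obtain y where "y \<in> P" "x = w + y" by blast
    then show "x \<in> {x. x - w \<in> P}" by simp
  next
    assume "x \<in> {x. x - w \<in> P}"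
    then have "x - w \<in> P" by simp
    moreover have "x = w + (x - w)" by simp
    ultimately show "x \<in> (+) w ` P" by (metis imageI)
  qed
qed

lemma erg_aff:
  fixes P :: "'a::euclidean_space set"
  assumes P: "P \<in> sets lebesgue" "per P" and l: "l \<ge> 2"
    and inv: "\<And>x. x \<in> P \<Longrightarrow> real l *\<^sub>R x + R \<in> P"
  shows "negligible P \<or> negligible (- P)"
proof -
  define w where "w = (1 / (real l - 1)) *\<^sub>R R"
  have "real l *\<^sub>R w - w = (real l - 1) *\<^sub>R w" by (simp add: algebra_simps)
  also have "\<dots> = R" using l by (simp add: w_def)
  finally have lw: "real l *\<^sub>R w - w = R" .
  define P' where "P' = (+) w ` P"
  have P'm: "P' \<in> sets lebesgue" unfolding P'_def using lebesgue_sets_translation[OF P(1), of w] by simp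
  have P'per: "per P'" using P(2) unfolding per_def P'_def tr_eq
    by (simp add: algebra_simps) (metis add_diff_eq diff_add_eq)
  have P'inv: "real l *\<^sub>R y \<in> P'" if "y \<in> P'" for y
  proof -
    have "y - w \<in> P" using that by (simp add: P'_def tr_eq)
    then have "real l *\<^sub>R (y - w) + R \<in> P" by (rule inv)
    moreover have "real l *\<^sub>R (y - w) + R = real l *\<^sub>R y - w" using lw by (simp add: algebra_simps)
    ultimately show ?thesis by (simp add: P'_def tr_eq)
  qed
  have "negligible P' \<or> negligible (- P')" by (rule erg0[OF P'm P'per l P'inv])
  moreover have "P = (+) (-w) ` P'" "- P = (+) (-w) ` (- P')"
    unfolding tr_eq by (auto simp: P'_def tr_eq)
  ultimately show ?thesis using negligible_translation by metis
qed




lemma Basis_mat: "(Basis :: (real^'m^'n) set) = {axis i (axis j 1) | i j. True}"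
  by (auto simp: Basis_vec_def)

lemma inner_mat_axis: "(X :: real^'m^'n) \<bullet> axis i (axis j 1) = X $ i $ j"
  by (simp add: inner_axis)

lemma ball_Basis_mat: "(\<forall>b\<in>(Basis :: (real^'m^'n) set). P b) \<longleftrightarrow> (\<forall>i j. P (axis i (axis j 1)))"
  by (auto simp: Basis_mat)

lemma Lam_mat: "(Z :: real^'m^'n) \<in> Lam \<longleftrightarrow> (\<forall>i j. Z $ i $ j \<in> \<int>)"
  by (simp add: Lam_def ball_Basis_mat inner_mat_axis)

lemma cube_eq: "unit_cube_mat = cbox (0::real^'m^'n) One"
  by (auto simp: unit_cube_mat_def mem_box ball_Basis_mat inner_mat_axis)

lemma cube_emeasure: "emeasure lebesgue (unit_cube_mat :: (real^'m^'n) set) = 1"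
  unfolding cube_eq by (simp add: emeasure_lborel_cbox_eq emeasure_completion)


lemma Gcd1_iff: "Gcd (A::int set) = 1 \<longleftrightarrow> \<not> (\<exists>r. prime r \<and> (\<forall>a\<in>A. r dvd a))"
proof
  assume g: "Gcd A = 1"
  show "\<not> (\<exists>r. prime r \<and> (\<forall>a\<in>A. r dvd a))"
  proof
    assume "\<exists>r. prime r \<and> (\<forall>a\<in>A. r dvd a)"
    then obtain r where r: "prime r" "\<forall>a\<in>A. r dvd a" by blast
    then have "r dvd Gcd A" by (intro Gcd_greatest) blast
    then have "r dvd 1" using g by simp
    then show False using r(1) not_prime_unit by blast
  qed
next
  assume n: "\<not> (\<exists>r. prime r \<and> (\<forall>a\<in>A. r dvd a))"
  show "Gcd A = 1"
  proof (rule ccontr)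
    assume ne: "Gcd A \<noteq> 1"
    show False
    proof (cases "Gcd A = 0")
      case True
      then have "\<forall>a\<in>A. a = 0" using Gcd_0_iff by blast
      then have "\<forall>a\<in>A. (2::int) dvd a" by auto
      moreover have "prime (2::int)" by simp
      ultimately show False using n by blast
    next
      case False
      have "\<not> is_unit (Gcd A)"
      proof
        assume "is_unit (Gcd A)"
        then have "normalize (Gcd A) = 1" by (rule is_unit_normalize)
        then have "Gcd A = 1" by simp
        with ne show False by simp
      qed
      then obtain r where r: "r dvd Gcd A" "prime r" using prime_divisor_exists[OF False] by blast
      have "\<forall>a\<in>A. r dvd a"
      proof
        fix a assume "a \<in> A"
        then have "Gcd A dvd a" by (rule Gcd_dvd)
        then show "r dvd a" using r(1) by (rule dvd_trans[rotated])
      qed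
      with n r(2) show False by blast
    qed
  qed
qed

definition Dv :: "int^'n \<Rightarrow> int \<Rightarrow> bool" where "Dv q r \<longleftrightarrow> (\<forall>i. r dvd q $ i)"

lemma cond_All: "cond_ok GcdAll p q \<longleftrightarrow> \<not> (\<exists>r. prime r \<and> (\<forall>j. r dvd p $ j) \<and> Dv q r)"
  unfolding cond_ok.simps Gcd1_iff Dv_def by blast

lemma cond_Each: "cond_ok GcdEach p q \<longleftrightarrow> (\<forall>j. \<not> (\<exists>r. prime r \<and> r dvd p $ j \<and> Dv q r))"
  unfolding cond_ok.simps Gcd1_iff Dv_def by blast

lemma cond_transfer:
  assumes c: "cond_ok c p q"
    and t: "\<And>r j. prime r \<Longrightarrow> Dv q r \<Longrightarrow> r dvd p' $ j \<Longrightarrow> r dvd p $ j"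
  shows "cond_ok c p' q"
proof (cases c)
  case NoCond then show ?thesis by simp
next
  case GcdAll
  show ?thesis unfolding GcdAll cond_All
  proof
    assume "\<exists>r. prime r \<and> (\<forall>j. r dvd p' $ j) \<and> Dv q r"
    then obtain r where r: "prime r" "\<forall>j. r dvd p' $ j" "Dv q r" by blast
    then have "\<forall>j. r dvd p $ j" using t by blast
    with r c show False unfolding GcdAll cond_All by blast
  qed
next
  case GcdEach
  show ?thesis unfolding GcdEach cond_Each
  proof (intro allI notI)
    fix j assume "\<exists>r. prime r \<and> r dvd p' $ j \<and> Dv q r"
    then obtain r where r: "prime r" "r dvd p' $ j" "Dv q r" by blast
    then have "r dvd p $ j" using t by blast
    with r c show False unfolding GcdEach cond_Each by blast
  qed
qed

definition sol :: "coprimality \<Rightarrow> ('m \<Rightarrow> int^'n \<Rightarrow> real) \<Rightarrow> (int^'n \<Rightarrow> bool) \<Rightarrow> real \<Rightarrow> real^'m^'n \<Rightarrow> ((int^'m) \<times> (int^'n)) set" where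
  "sol c \<Psi> C k X = {(p,q). q \<noteq> 0 \<and> cond_ok c p q \<and> C q \<and> (\<forall>j. \<bar>linform q X j + real_of_int (p$j)\<bar> < k * \<Psi> j q)}"

definition PC :: "coprimality \<Rightarrow> ('m \<Rightarrow> int^'n \<Rightarrow> real) \<Rightarrow> (int^'n \<Rightarrow> bool) \<Rightarrow> (real^'m^'n) set" where
  "PC c \<Psi> C = {X. \<exists>k::nat. k \<ge> 1 \<and> infinite (sol c \<Psi> C (real k) X)}"

lemma F_PC: "F_set c \<Psi> = PC c \<Psi> (\<lambda>_. True) \<inter> unit_cube_mat"
  by (auto simp: F_set_def approx_set_def PC_def sol_def)

lemma sol_transfer:
  assumes "\<And>p q. (p,q) \<in> sol c \<Psi> C k X \<Longrightarrow> (g q p, q) \<in> sol c \<Psi> C k' X'"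
    and "\<And>q. inj (g q)"
    and "infinite (sol c \<Psi> C k X)"
  shows "infinite (sol c \<Psi> C k' X')"
proof -
  define h where "h = (\<lambda>(p,q). (g q p, q))"
  have "inj h" unfolding h_def using assms(2) by (auto simp: inj_def)
  then have "infinite (h ` sol c \<Psi> C k X)" using assms(3) by (simp add: finite_image_iff inj_on_subset)
  moreover have "h ` sol c \<Psi> C k X \<subseteq> sol c \<Psi> C k' X'" using assms(1) by (auto simp: h_def)
  ultimately show ?thesis using finite_subset by blast
qed

lemma linform_add: "linform q (X + Y) j = linform q X j + linform q Y j"
  by (simp add: linform_def algebra_simps sum.distrib)

lemma linform_scale: "linform q (r *\<^sub>R X) j = r * linform q X j"
  by (simp add: linform_def sum_distrib_left algebra_simps)

definition imat :: "real^'m^'n \<Rightarrow> int^'m^'n" where "imat Z = (\<chi> i j. \<lfloor>Z$i$j\<rfloor>)"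

definition vq :: "int^'n \<Rightarrow> int^'m^'n \<Rightarrow> int^'m" where "vq q E = (\<chi> j. \<Sum>i\<in>UNIV. q$i * E$i$j)"

lemma linform_Lam:
  assumes "Z \<in> Lam" shows "linform q Z j = real_of_int (vq q (imat Z) $ j)"
proof -
  have eq: "Z$i$j = of_int \<lfloor>Z$i$j\<rfloor>" for i using assms by (auto simp: Lam_mat elim!: Ints_cases)
  have "(\<Sum>i\<in>UNIV. real_of_int (q$i) * Z$i$j) = (\<Sum>i\<in>UNIV. real_of_int (q$i * \<lfloor>Z$i$j\<rfloor>))"
    by (rule sum.cong[OF refl]) (metis eq of_int_mult)
  then show ?thesis by (simp add: linform_def vq_def imat_def)
qed

lemma dvd_vq: "(\<And>i. r dvd q$i) \<Longrightarrow> r dvd vq q E $ j"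
  unfolding vq_def by (simp add: dvd_sum)

lemma per_PC:
  fixes \<Psi> :: "'m::finite \<Rightarrow> int^'n::finite \<Rightarrow> real"
  shows "per (PC c \<Psi> C)"
proof -
  have step: "X + Z \<in> PC c \<Psi> C" if X: "X \<in> PC c \<Psi> C" and Z: "Z \<in> Lam" for X Z
  proof -
    obtain k :: nat where k: "k \<ge> 1" "infinite (sol c \<Psi> C (real k) X)" using X by (auto simp: PC_def)
    have "infinite (sol c \<Psi> C (real k) (X + Z))"
    proof (rule sol_transfer[OF _ _ k(2), where g="\<lambda>q p. p - vq q (imat Z)"])
      show "inj (\<lambda>p. p - vq q (imat Z))" for q by (simp add: inj_def)
      fix p q assume pq: "(p, q) \<in> sol c \<Psi> C (real k) X"
      have e: "linform q (X + Z) j + real_of_int ((p - vq q (imat Z)) $ j) = linform q X j + real_of_int (p $ j)" for j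
        using Z by (simp add: linform_add linform_Lam)
      have "cond_ok c (p - vq q (imat Z)) q"
      proof (rule cond_transfer)
        show "cond_ok c p q" using pq by (simp add: sol_def)
        fix r j assume r: "prime r" "Dv q r" "r dvd (p - vq q (imat Z)) $ j"
        have "r dvd vq q (imat Z) $ j" using r(2) by (intro dvd_vq) (simp add: Dv_def)
        then show "r dvd p $ j" using r(3) by (simp add: dvd_diff_commute) (metis diff_add_cancel dvd_add)
      qed
      moreover have "\<forall>j. \<bar>linform q (X + Z) j + real_of_int ((p - vq q (imat Z)) $ j)\<bar> < real k * \<Psi> j q"
        unfolding e using pq by (simp add: sol_def)
      ultimately show "(p - vq q (imat Z), q) \<in> sol c \<Psi> C (real k) (X + Z)"
        using pq unfolding sol_def mem_Collect_eq prod.case by blast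
    qed
    then show ?thesis using k(1) by (auto simp: PC_def)
  qed
  show ?thesis unfolding per_def
  proof (intro allI impI iffI)
    fix x z :: "real^'m^'n" assume z: "z \<in> Lam" and xz: "x + z \<in> PC c \<Psi> C"
    have "x + z + - z \<in> PC c \<Psi> C" by (rule step[OF xz Lam_minus[OF z]])
    then show "x \<in> PC c \<Psi> C" by simp
  next
    fix x z :: "real^'m^'n" assume "z \<in> Lam" "x \<in> PC c \<Psi> C"
    then show "x + z \<in> PC c \<Psi> C" by (rule step[rotated])
  qed
qed

lemma infinite_to_nat_iff:
  fixes A :: "'a::countable set"
  shows "infinite A \<longleftrightarrow> (\<forall>n. \<exists>s\<in>A. n \<le> to_nat s)"
proof
  assume "infinite A"
  moreover have "inj_on to_nat A" by (rule inj_on_subset[OF inj_to_nat subset_UNIV])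
  ultimately have "infinite (to_nat ` A)" using finite_imageD by blast
  then have u: "\<forall>m. \<exists>n\<ge>m. n \<in> to_nat ` A" by (simp add: infinite_nat_iff_unbounded_le)
  show "\<forall>n. \<exists>s\<in>A. n \<le> to_nat s"
  proof
    fix m
    obtain n where "n \<ge> m" "n \<in> to_nat ` A" using u by blast
    then show "\<exists>s\<in>A. m \<le> to_nat s" by blast
  qed
next
  assume u: "\<forall>n. \<exists>s\<in>A. n \<le> to_nat s"
  show "infinite A"
  proof
    assume "finite A"
    then have "finite (to_nat ` A)" by (rule finite_imageI)
    then obtain m where m: "\<forall>x\<in>to_nat ` A. x \<le> m" using finite_nat_set_iff_bounded_le by blast
    obtain s where s: "s \<in> A" "Suc m \<le> to_nat s" using u by blast
    have "to_nat s \<le> m" using m s(1) by blast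
    with s(2) show False by simp
  qed
qed

lemma linform_cont: "continuous_on UNIV (\<lambda>X. linform q X j)"
  unfolding linform_def by (intro continuous_intros)

lemma PC_leb:
  fixes \<Psi> :: "'m::finite \<Rightarrow> int^'n::finite \<Rightarrow> real"
  shows "PC c \<Psi> C \<in> sets lebesgue"
proof -
  define Sset where "Sset = {(p::int^'m, q::int^'n). q \<noteq> 0 \<and> cond_ok c p q \<and> C q}"
  define Ob where "Ob k s = {X::real^'m^'n. \<forall>j. \<bar>linform (snd s) X j + real_of_int (fst s $ j)\<bar> < k * \<Psi> j (snd s)}" for k s
  have solO: "sol c \<Psi> C k X = {s\<in>Sset. X \<in> Ob k s}" for k X
    by (auto simp: sol_def Sset_def Ob_def)
  have Oopen: "open (Ob k s)" for k s
  proof -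
    have "Ob k s = (\<Inter>j. {X. \<bar>linform (snd s) X j + real_of_int (fst s $ j)\<bar> < k * \<Psi> j (snd s)})"
      by (auto simp: Ob_def)
    also have "open \<dots>"
      by (intro open_INT finite_UNIV ballI open_Collect_less continuous_intros linform_cont) auto
    finally show ?thesis .
  qed
  have "PC c \<Psi> C = (\<Union>k\<in>{1::nat..}. \<Inter>n. \<Union>s\<in>{s\<in>Sset. n \<le> to_nat s}. Ob (real k) s)"
    unfolding PC_def solO infinite_to_nat_iff by (rule set_eqI) (auto, blast+)
  also have "\<dots> \<in> sets lebesgue"
    by (intro sets.countable_UN'' sets.countable_INT countableI_type)
       (auto intro!: sets.countable_UN'' countableI_type borel_leb borel_open Oopen)
  finally show ?thesis .
qed

lemma PC_map:
  fixes \<Psi> :: "'m::finite \<Rightarrow> int^'n::finite \<Rightarrow> real"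
  assumes X: "X \<in> PC c \<Psi> C" and l: "l \<ge> (1::nat)"
    and m: "\<And>k p q. (p,q) \<in> sol c \<Psi> C (real k) X \<Longrightarrow> (g q p, q) \<in> sol c \<Psi> C (real (l*k)) X'"
    and inj: "\<And>q. inj (g q)"
  shows "X' \<in> PC c \<Psi> C"
proof -
  obtain k :: nat where k: "k \<ge> 1" "infinite (sol c \<Psi> C (real k) X)" using X by (auto simp: PC_def)
  have "infinite (sol c \<Psi> C (real (l*k)) X')"
    by (rule sol_transfer[OF _ inj k(2)]) (rule m)
  moreover have "l * k \<ge> 1" using k(1) l by simp
  ultimately show ?thesis unfolding PC_def by blast
qed

lemma prime_other:
  fixes r :: int
  assumes "prime r" "prime (int l)" "r \<noteq> int l" "r dvd int l * a"
  shows "r dvd a"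
proof -
  have "r dvd int l \<or> r dvd a" using assms(1,4) prime_dvd_multD by blast
  moreover have "\<not> r dvd int l" using assms(1-3) primes_dvd_imp_eq by blast
  ultimately show ?thesis by blast
qed

definition C0 :: "nat \<Rightarrow> int^'n \<Rightarrow> bool" where "C0 l q \<longleftrightarrow> \<not> Dv q (int l)"
definition C1 :: "nat \<Rightarrow> 'n \<Rightarrow> int^'n \<Rightarrow> bool" where
  "C1 l i0 q \<longleftrightarrow> Dv q (int l) \<and> \<not> (int l)^2 dvd q$i0"
definition C2 :: "nat \<Rightarrow> int^'n \<Rightarrow> bool" where "C2 l q \<longleftrightarrow> Dv q ((int l)^2)"

lemma map0:
  fixes \<Psi> :: "'m::finite \<Rightarrow> int^'n::finite \<Rightarrow> real"
  assumes l: "prime l" and X: "X \<in> PC c \<Psi> (C0 l)"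
  shows "real l *\<^sub>R X \<in> PC c \<Psi> (C0 l)"
proof (rule PC_map[OF X, where l=l and g="\<lambda>q p. \<chi> j. int l * p$j"])
  show "l \<ge> 1" using l prime_ge_1_nat by blast
  show "inj (\<lambda>p. \<chi> j. int l * p$j :: int^'m)" for q
  proof (rule injI)
    fix a b :: "int^'m" assume e: "(\<chi> j. int l * a$j) = (\<chi> j. int l * b$j)"
    have "int l * a$j = int l * b$j" for j using arg_cong[OF e, of "\<lambda>v. v$j"] by simp
    moreover have "int l \<noteq> 0" using l by (simp add: prime_gt_0_nat)
    ultimately show "a = b" by (simp add: vec_eq_iff)
  qed
  fix k p q assume pq: "(p, q) \<in> sol c \<Psi> (C0 l) (real k) X"
  have cq: "C0 l q" "q \<noteq> 0" "cond_ok c p q" using pq by (auto simp: sol_def)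
  have b: "\<bar>linform q X j + real_of_int (p $ j)\<bar> < real k * \<Psi> j q" for j using pq by (auto simp: sol_def)
  have "\<bar>linform q (real l *\<^sub>R X) j + real_of_int ((\<chi> j. int l * p$j) $ j)\<bar> < real (l*k) * \<Psi> j q" for j
  proof -
    have "\<bar>linform q (real l *\<^sub>R X) j + real_of_int ((\<chi> j. int l * p$j) $ j)\<bar>
        = \<bar>real l * (linform q X j + real_of_int (p $ j))\<bar>"
      by (simp add: linform_scale algebra_simps)
    also have "\<dots> = real l * \<bar>linform q X j + real_of_int (p $ j)\<bar>"
      by (simp add: abs_mult)
    also have "\<dots> < real l * (real k * \<Psi> j q)"
      using b[of j] l by (simp add: prime_gt_0_nat)
    finally show ?thesis by (simp add: mult.assoc)
  qed
  moreover have "cond_ok c (\<chi> j. int l * p$j) q"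
  proof (rule cond_transfer[OF cq(3)])
    fix r j assume r: "prime r" "Dv q r" "r dvd (\<chi> j. int l * p$j) $ j"
    have "r \<noteq> int l" using r(2) cq(1) by (auto simp: C0_def)
    moreover have "r dvd int l * p $ j" using r(3) by simp
    moreover have "prime (int l)" using l by simp
    ultimately show "r dvd p $ j" using prime_other[OF r(1)] by blast
  qed
  ultimately show "((\<chi> j. int l * p$j), q) \<in> sol c \<Psi> (C0 l) (real (l*k)) (real l *\<^sub>R X)"
    using cq unfolding sol_def mem_Collect_eq prod.case by blast
qed

definition Rm :: "nat \<Rightarrow> 'n \<Rightarrow> real^'m^'n" where
  "Rm l i0 = (\<chi> i j. if i = i0 then 1 / real l else 0)"

lemma linform_Rm:
  fixes q :: "int^'n::finite"
  assumes "l > 0" "int l dvd q$i0"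
  shows "linform q (Rm l i0 :: real^'m::finite^'n) j = real_of_int (q$i0 div int l)"
proof -
  have "linform q (Rm l i0 :: real^'m^'n) j = real_of_int (q$i0) / real l"
    unfolding linform_def Rm_def by (simp add: if_distrib cong: if_cong)
  also have "q$i0 = int l * (q$i0 div int l)" using assms(2) by simp
  finally show ?thesis using assms(1) by simp
qed

lemma map1:
  fixes \<Psi> :: "'m::finite \<Rightarrow> int^'n::finite \<Rightarrow> real"
  assumes l: "prime l" and X: "X \<in> PC c \<Psi> (C1 l i0)"
  shows "real l *\<^sub>R X + Rm l i0 \<in> PC c \<Psi> (C1 l i0)"
proof (rule PC_map[OF X, where l=l and g="\<lambda>q p. \<chi> j. int l * p$j - q$i0 div int l"])
  have l0: "l > 0" using l by (simp add: prime_gt_0_nat)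
  have pl: "prime (int l)" using l by simp
  show "l \<ge> 1" using l prime_ge_1_nat by blast
  show "inj (\<lambda>p. \<chi> j. int l * p$j - q$i0 div int l :: int^'m)" for q
  proof (rule injI)
    fix a b :: "int^'m" assume e: "(\<chi> j. int l * a$j - q$i0 div int l) = (\<chi> j. int l * b$j - q$i0 div int l)"
    have "int l * a$j = int l * b$j" for j using arg_cong[OF e, of "\<lambda>v. v$j"] by simp
    moreover have "int l \<noteq> 0" using l0 by simp
    ultimately show "a = b" by (simp add: vec_eq_iff)
  qed
  fix k p q assume pq: "(p, q) \<in> sol c \<Psi> (C1 l i0) (real k) X"
  have cq: "C1 l i0 q" "q \<noteq> 0" "cond_ok c p q" using pq by (auto simp: sol_def)
  define t where "t = q$i0 div int l"
  have dq: "int l dvd q$i0" using cq(1) by (simp add: C1_def Dv_def)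
  have qt: "q$i0 = int l * t" using dq by (simp add: t_def)
  have b: "\<bar>linform q X j + real_of_int (p $ j)\<bar> < real k * \<Psi> j q" for j using pq by (auto simp: sol_def)
  have "\<bar>linform q (real l *\<^sub>R X + Rm l i0) j + real_of_int ((\<chi> j. int l * p$j - q$i0 div int l) $ j)\<bar> < real (l*k) * \<Psi> j q" for j
  proof -
    have "\<bar>linform q (real l *\<^sub>R X + Rm l i0) j + real_of_int ((\<chi> j. int l * p$j - q$i0 div int l) $ j)\<bar>
        = \<bar>real l * (linform q X j + real_of_int (p $ j))\<bar>"
      using linform_Rm[OF l0 dq, where 'm='m, of j] by (simp add: linform_add linform_scale algebra_simps)
    also have "\<dots> = real l * \<bar>linform q X j + real_of_int (p $ j)\<bar>"
      by (simp add: abs_mult)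
    also have "\<dots> < real l * (real k * \<Psi> j q)"
      using b[of j] l0 by simp
    finally show ?thesis by (simp add: mult.assoc)
  qed
  moreover have "cond_ok c (\<chi> j. int l * p$j - q$i0 div int l) q"
  proof (rule cond_transfer[OF cq(3)])
    fix r j assume r: "prime r" "Dv q r" "r dvd (\<chi> j. int l * p$j - q$i0 div int l) $ j"
    have r3: "r dvd int l * p$j - t" using r(3) by (simp add: t_def)
    show "r dvd p $ j"
    proof (cases "r = int l")
      case True
      then have "r dvd int l * p$j" by simp
      then have "r dvd int l * p$j - (int l * p$j - t)" using r3 by (rule dvd_diff)
      then have "r dvd t" by simp
      then obtain s where "t = int l * s" using True by (auto elim: dvdE)
      then have "q$i0 = (int l)^2 * s" using qt by (simp add: power2_eq_square)
      then have "(int l)^2 dvd q$i0" unfolding dvd_def by blast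
      then show ?thesis using cq(1) by (simp add: C1_def)
    next
      case False
      have "r dvd q$i0" using r(2) by (simp add: Dv_def)
      then have "r dvd int l * t" using qt by simp
      then have "r dvd t" using prime_other[OF r(1) pl False] by blast
      then have "r dvd (int l * p$j - t) + t" using r3 by (intro dvd_add)
      then have "r dvd int l * p$j" by simp
      then show ?thesis using prime_other[OF r(1) pl False] by blast
    qed
  qed
  ultimately show "((\<chi> j. int l * p$j - q$i0 div int l), q) \<in> sol c \<Psi> (C1 l i0) (real (l*k)) (real l *\<^sub>R X + Rm l i0)"
    using cq unfolding sol_def mem_Collect_eq prod.case by blast
qed

definition qd :: "nat \<Rightarrow> int^'n \<Rightarrow> int^'n" where "qd l q = (\<chi> i. q$i div int l)"

lemma map2:
  fixes \<Psi> :: "'m::finite \<Rightarrow> int^'n::finite \<Rightarrow> real"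
  assumes l: "prime l" and X: "X \<in> PC c \<Psi> (C2 l)" and Z: "Z \<in> Lam"
  shows "X + (1 / real l) *\<^sub>R Z \<in> PC c \<Psi> (C2 l)"
proof -
  have l0: "l > 0" using l by (simp add: prime_gt_0_nat)
  have pl: "prime (int l)" using l by simp
  have X': "X + (1 / real l) *\<^sub>R Z \<in> PC c \<Psi> (C2 l)"
  proof (rule PC_map[OF X, where l=1 and g="\<lambda>q p. p - vq (qd l q) (imat Z)"])
    show "(1::nat) \<ge> 1" by simp
    show "inj (\<lambda>p. p - vq (qd l q) (imat Z))" for q by (simp add: inj_def)
    fix k p q assume pq: "(p, q) \<in> sol c \<Psi> (C2 l) (real k) X"
    have cq: "C2 l q" "q \<noteq> 0" "cond_ok c p q" using pq by (auto simp: sol_def)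
    have dl: "int l dvd q$i" for i
    proof -
      have "(int l)^2 dvd q$i" using cq(1) by (simp add: C2_def Dv_def)
      moreover have "int l dvd (int l)^2" by (simp add: power2_eq_square)
      ultimately show ?thesis using dvd_trans by blast
    qed
    have qq: "q$i = int l * qd l q $ i" for i using dl[of i] by (simp add: qd_def)
    have vqe: "vq q E $ j = int l * vq (qd l q) E $ j" for E j
    proof -
      have "(\<Sum>i\<in>UNIV. q$i * E$i$j) = (\<Sum>i\<in>UNIV. int l * (qd l q $ i * E$i$j))"
        by (rule sum.cong[OF refl]) (simp add: qq mult.assoc)
      then show ?thesis unfolding vq_def by (simp add: sum_distrib_left)
    qed
    have lz: "linform q ((1 / real l) *\<^sub>R Z) j = real_of_int (vq (qd l q) (imat Z) $ j)" for j
      using l0 by (simp add: linform_scale linform_Lam[OF Z] vqe)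
    have b: "\<bar>linform q X j + real_of_int (p $ j)\<bar> < real k * \<Psi> j q" for j using pq by (auto simp: sol_def)
    have "\<bar>linform q (X + (1 / real l) *\<^sub>R Z) j + real_of_int ((p - vq (qd l q) (imat Z)) $ j)\<bar> < real (1*k) * \<Psi> j q" for j
      using b[of j] by (simp add: linform_add lz)
    moreover have "cond_ok c (p - vq (qd l q) (imat Z)) q"
    proof (rule cond_transfer[OF cq(3)])
      fix r j assume r: "prime r" "Dv q r" "r dvd (p - vq (qd l q) (imat Z)) $ j"
      have "r dvd qd l q $ i" for i
      proof (cases "r = int l")
        case True
        have "(int l)^2 dvd q$i" using cq(1) by (simp add: C2_def Dv_def)
        then obtain s where "q$i = (int l)^2 * s" by blast
        then have "qd l q $ i = int l * s" using l0 by (simp add: qd_def power2_eq_square)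
        then show ?thesis using True by simp
      next
        case False
        have "r dvd q$i" using r(2) by (simp add: Dv_def)
        then have "r dvd int l * qd l q $ i" using qq[of i] by simp
        then show ?thesis using prime_other[OF r(1) pl False] by blast
      qed
      then have "r dvd vq (qd l q) (imat Z) $ j" by (rule dvd_vq)
      then have "r dvd (p - vq (qd l q) (imat Z)) $ j + vq (qd l q) (imat Z) $ j" using r(3) by (intro dvd_add)
      then show "r dvd p $ j" by simp
    qed
    ultimately show "(p - vq (qd l q) (imat Z), q) \<in> sol c \<Psi> (C2 l) (real (1*k)) (X + (1 / real l) *\<^sub>R Z)"
      using cq unfolding sol_def mem_Collect_eq prod.case by blast
  qed
  then show ?thesis .
qed

lemma sol_C: "sol c \<Psi> C k X = {s \<in> sol c \<Psi> (\<lambda>_. True) k X. C (snd s)}"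
  by (auto simp: sol_def)

lemma PC_mono: "PC c \<Psi> C \<subseteq> PC c \<Psi> (\<lambda>_. True)"
proof
  fix X assume "X \<in> PC c \<Psi> C"
  then obtain k :: nat where k: "k \<ge> 1" "infinite (sol c \<Psi> C (real k) X)" by (auto simp: PC_def)
  have "sol c \<Psi> C (real k) X \<subseteq> sol c \<Psi> (\<lambda>_. True) (real k) X" by (auto simp: sol_def)
  then have "infinite (sol c \<Psi> (\<lambda>_. True) (real k) X)" using k(2) finite_subset by blast
  then show "X \<in> PC c \<Psi> (\<lambda>_. True)" using k(1) by (auto simp: PC_def)
qed

lemma PC_split:
  fixes \<Psi> :: "'m::finite \<Rightarrow> int^'n::finite \<Rightarrow> real"
  shows "PC c \<Psi> (\<lambda>_. True) \<subseteq> PC c \<Psi> (C0 l) \<union> (\<Union>i0. PC c \<Psi> (C1 l i0)) \<union> PC c \<Psi> (C2 l)"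
proof
  fix X assume "X \<in> PC c \<Psi> (\<lambda>_. True)"
  then obtain k :: nat where k: "k \<ge> 1" "infinite (sol c \<Psi> (\<lambda>_. True) (real k) X)" by (auto simp: PC_def)
  have cov: "sol c \<Psi> (\<lambda>_. True) (real k) X \<subseteq> sol c \<Psi> (C0 l) (real k) X \<union> (\<Union>i0. sol c \<Psi> (C1 l i0) (real k) X) \<union> sol c \<Psi> (C2 l) (real k) X"
  proof
    fix s assume s: "s \<in> sol c \<Psi> (\<lambda>_. True) (real k) X"
    have "C0 l (snd s) \<or> (\<exists>i0. C1 l i0 (snd s)) \<or> C2 l (snd s)"
      by (auto simp: C0_def C1_def C2_def Dv_def)
    then show "s \<in> sol c \<Psi> (C0 l) (real k) X \<union> (\<Union>i0. sol c \<Psi> (C1 l i0) (real k) X) \<union> sol c \<Psi> (C2 l) (real k) X"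
      using s by (subst (1 2 3) sol_C) blast
  qed
  have "infinite (sol c \<Psi> (C0 l) (real k) X) \<or> (\<exists>i0. infinite (sol c \<Psi> (C1 l i0) (real k) X)) \<or> infinite (sol c \<Psi> (C2 l) (real k) X)"
  proof (rule ccontr)
    assume "\<not> ?thesis"
    then have "finite (sol c \<Psi> (C0 l) (real k) X \<union> (\<Union>i0. sol c \<Psi> (C1 l i0) (real k) X) \<union> sol c \<Psi> (C2 l) (real k) X)"
      by auto
    then show False using k(2) cov finite_subset by blast
  qed
  then show "X \<in> PC c \<Psi> (C0 l) \<union> (\<Union>i0. PC c \<Psi> (C1 l i0)) \<union> PC c \<Psi> (C2 l)"
    using k(1) by (auto simp: PC_def)
qed

lemma main_negl:
  fixes \<Psi> :: "'m::finite \<Rightarrow> int^'n::finite \<Rightarrow> real"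
  shows "negligible (PC c \<Psi> (\<lambda>_. True)) \<or> negligible (- PC c \<Psi> (\<lambda>_. True))"
proof -
  define P where "P = PC c \<Psi> (\<lambda>_. True)"
  have Pm: "P \<in> sets lebesgue" "per P" unfolding P_def by (rule PC_leb, rule per_PC)
  show ?thesis
  proof (cases "\<exists>l. prime l \<and> (\<not> negligible (PC c \<Psi> (C0 l)) \<or> (\<exists>i0. \<not> negligible (PC c \<Psi> (C1 l i0))))")
    case True
    then obtain l where l: "prime l" and alt: "\<not> negligible (PC c \<Psi> (C0 l)) \<or> (\<exists>i0. \<not> negligible (PC c \<Psi> (C1 l i0)))"
      by blast
    have l2: "l \<ge> 2" using l prime_ge_2_nat by blast
    from alt show ?thesis
    proof
      assume nn: "\<not> negligible (PC c \<Psi> (C0 l))"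
      have "negligible (PC c \<Psi> (C0 l)) \<or> negligible (- PC c \<Psi> (C0 l))"
        by (rule erg0[OF PC_leb per_PC l2]) (rule map0[OF l])
      then have "negligible (- PC c \<Psi> (C0 l))" using nn by blast
      moreover have "- PC c \<Psi> (\<lambda>_. True) \<subseteq> - PC c \<Psi> (C0 l)" using PC_mono by blast
      ultimately show ?thesis using negligible_subset by blast
    next
      assume "\<exists>i0. \<not> negligible (PC c \<Psi> (C1 l i0))"
      then obtain i0 where nn: "\<not> negligible (PC c \<Psi> (C1 l i0))" by blast
      have "negligible (PC c \<Psi> (C1 l i0)) \<or> negligible (- PC c \<Psi> (C1 l i0))"
        by (rule erg_aff[OF PC_leb per_PC l2]) (rule map1[OF l])
      then have "negligible (- PC c \<Psi> (C1 l i0))" using nn by blast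
      moreover have "- PC c \<Psi> (\<lambda>_. True) \<subseteq> - PC c \<Psi> (C1 l i0)" using PC_mono by blast
      ultimately show ?thesis using negligible_subset by blast
    qed
  next
    case False
    then have neg0: "\<And>l. prime l \<Longrightarrow> negligible (PC c \<Psi> (C0 l))"
      and neg1: "\<And>l i0. prime l \<Longrightarrow> negligible (PC c \<Psi> (C1 l i0))" by blast+
    have "negligible P \<or> negligible (- P)"
    proof (rule trans0[OF Pm, where I="{l::nat. prime l}"])
      show "infinite {l::nat. prime l}" by (rule primes_infinite)
      show "0 \<notin> {l::nat. prime l}" by simp
      fix N :: nat and z :: "real^'m^'n" assume N: "N \<in> {l. prime l}" and z: "z \<in> Lam"
      have Np: "prime N" using N by simp
      define Nl where "Nl = PC c \<Psi> (C0 N) \<union> (\<Union>i0. PC c \<Psi> (C1 N i0))"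
      have nNl: "negligible Nl"
        unfolding Nl_def using neg0[OF Np] neg1[OF Np]
        by (intro negligible_Un negligible_countable_Union) auto
      have "P - (+) ((1 / real N) *\<^sub>R z) ` P \<subseteq> Nl"
      proof
        fix x assume x: "x \<in> P - (+) ((1 / real N) *\<^sub>R z) ` P"
        show "x \<in> Nl"
        proof (rule ccontr)
          assume "x \<notin> Nl"
          then have x2: "x \<in> PC c \<Psi> (C2 N)" using x PC_split[of c \<Psi> N] unfolding P_def Nl_def by blast
          have "x + (1 / real N) *\<^sub>R (- z) \<in> PC c \<Psi> (C2 N)" by (rule map2[OF Np x2 Lam_minus[OF z]])
          then have "x - (1 / real N) *\<^sub>R z \<in> P" using PC_mono unfolding P_def by (simp add: algebra_simps) blast
          then have "x \<in> (+) ((1 / real N) *\<^sub>R z) ` P" by (metis add_diff_cancel_left' diff_add_cancel image_eqI add.commute)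
          then show False using x by blast
        qed
      qed
      then show "negligible (P - (+) ((1 / real N) *\<^sub>R z) ` P)" using nNl negligible_subset by blast
    qed
    then show ?thesis unfolding P_def .
  qed
qed

theorem mainTheorem7:
  fixes \<Psi> :: "'m::finite \<Rightarrow> int^'n::finite \<Rightarrow> real"
    and c :: coprimality
  assumes "\<And>j q. \<Psi> j q > 0"
  shows "F_set c \<Psi> \<in> sets lebesgue \<and>
         (emeasure lebesgue (F_set c \<Psi>) = 0 \<or> emeasure lebesgue (F_set c \<Psi>) = 1)"
proof -
  define P where "P = PC c \<Psi> (\<lambda>_. True)"
  have Pm: "P \<in> sets lebesgue" unfolding P_def by (rule PC_leb)
  have cm: "(unit_cube_mat :: (real^'m^'n) set) \<in> sets lebesgue"
    unfolding cube_eq by (auto intro: fmeasurableD)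
  have F: "F_set c \<Psi> = P \<inter> unit_cube_mat" unfolding P_def by (rule F_PC)
  have Fm: "F_set c \<Psi> \<in> sets lebesgue" unfolding F using Pm cm by auto
  have "emeasure lebesgue (F_set c \<Psi>) = 0 \<or> emeasure lebesgue (F_set c \<Psi>) = 1"
    using main_negl[of c \<Psi>] unfolding P_def[symmetric]
  proof
    assume "negligible P"
    then have "negligible (F_set c \<Psi>)" unfolding F using negligible_subset by blast
    then show ?thesis using Fm negligible_iff_emeasure0 by blast
  next
    assume n: "negligible (- P)"
    have "F_set c \<Psi> = unit_cube_mat - (- P)" unfolding F by auto
    moreover have "emeasure lebesgue (unit_cube_mat - (- P)) = emeasure lebesgue (unit_cube_mat :: (real^'m^'n) set)"
      by (rule emeasure_Diff_null_set) (use n cm in \<open>auto simp: negligible_iff_null_sets\<close>)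
    ultimately show ?thesis using cube_emeasure[where 'm='m and 'n='n] by simp
  qed
  with Fm show ?thesis by blast
qed


end
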